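(* Let $X$ be a path-connected finite down-wide poset and let $f\colon X\to\mathbb R$ be an injective Morse function. Let $a<b$ be real numbers. If $b_0(X_a)<b_0(X_b)$, then there exists a critical value $c\in(a,b]$ of $f$ such that $b_0(X_c)=b_0(X_a)+1$; moreover, the critical point $x$ with $f(x)=c$ is a minimal element of $X$.
   Context: A finite poset is regarded as a finite $T_0$-space whose open sets are down-sets; $U_x=\{y: y\le x\}$. Write $a\prec b$ if $a<b$ and there is no $c$ with $a<c<b$. $X$ is down-wide if $\#\{y:y\prec x\}\ge2$ for every non-minimal $x$. A Morse function on $X$ is a map $f\colon X\to\mathbb R$ such that for every $x$, $\#\{y: x\prec y,\ f(x)\ge f(y)\}\le1$ and $\#\{w: w\prec x,\ f(w)\ge f(x)\}\le 1$; $x$ is critical if both sets are empty, and critical values are images of critical points. For $t\in\mathbb R$, $X_t=X^f_t=\bigcup_{f(x)\le t}U_x$ (an open subposet). $b_0(Y)$ denotes the number of connected components of $Y$. *)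

theory Defs
  imports "HOL-Analysis.Analysis"
begin

text \<open>A finite poset is modelled as a finite subset X of a type with a partial order,
carrying the induced order.  Its finite-space topology has the down-sets as open sets.\<close>

definition poset_topology :: "'a::order set \<Rightarrow> 'a topology" where
  "poset_topology X = topology (\<lambda>U. U \<subseteq> X \<and> (\<forall>x\<in>U. \<forall>y\<in>X. y \<le> x \<longrightarrow> y \<in> U))"

definition covers :: "'a::order set \<Rightarrow> 'a \<Rightarrow> 'a \<Rightarrow> bool" where
  "covers X a b \<longleftrightarrow> a \<in> X \<and> b \<in> X \<and> a < b \<and> \<not> (\<exists>c\<in>X. a < c \<and> c < b)"

definition minimal_in :: "'a::order set \<Rightarrow> 'a \<Rightarrow> bool" where
  "minimal_in X x \<longleftrightarrow> x \<in> X \<and> \<not> (\<exists>y\<in>X. y < x)"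

definition down_wide :: "'a::order set \<Rightarrow> bool" where
  "down_wide X \<longleftrightarrow> (\<forall>x\<in>X. \<not> minimal_in X x \<longrightarrow> card {y\<in>X. covers X y x} \<ge> 2)"

definition morse_function :: "'a::order set \<Rightarrow> ('a \<Rightarrow> real) \<Rightarrow> bool" where
  "morse_function X f \<longleftrightarrow> (\<forall>x\<in>X.
      card {y\<in>X. covers X x y \<and> f x \<ge> f y} \<le> 1 \<and>
      card {w\<in>X. covers X w x \<and> f w \<ge> f x} \<le> 1)"

definition critical_point :: "'a::order set \<Rightarrow> ('a \<Rightarrow> real) \<Rightarrow> 'a \<Rightarrow> bool" where
  "critical_point X f x \<longleftrightarrow> x \<in> X \<and>
      {y\<in>X. covers X x y \<and> f x \<ge> f y} = {} \<and>
      {w\<in>X. covers X w x \<and> f w \<ge> f x} = {}"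

definition critical_value :: "'a::order set \<Rightarrow> ('a \<Rightarrow> real) \<Rightarrow> real \<Rightarrow> bool" where
  "critical_value X f c \<longleftrightarrow> (\<exists>x. critical_point X f x \<and> f x = c)"

definition sublevel :: "'a::order set \<Rightarrow> ('a \<Rightarrow> real) \<Rightarrow> real \<Rightarrow> 'a set" where
  "sublevel X f t = (\<Union>x\<in>{x\<in>X. f x \<le> t}. {y\<in>X. y \<le> x})"

definition b0 :: "'a::order set \<Rightarrow> 'a set \<Rightarrow> nat" where
  "b0 X Y = card (connected_components_of (subtopology (poset_topology X) Y))"

end

theory Submission
  imports Defs
begin

lemma istop_pt: "istopology (\<lambda>U. U \<subseteq> X \<and> (\<forall>x\<in>U. \<forall>y\<in>X. y \<le> (x::'a::order) \<longrightarrow> y \<in> U))"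
  unfolding istopology_def by blast

lemma openin_pt: "openin (poset_topology X) U \<longleftrightarrow> U \<subseteq> X \<and> (\<forall>x\<in>U. \<forall>y\<in>X. y \<le> x \<longrightarrow> y \<in> U)"
  unfolding poset_topology_def topology_inverse'[OF istop_pt] ..

lemma topspace_pt: "topspace (poset_topology X) = X"
proof (rule subset_antisym)
  have "openin (poset_topology X) (topspace (poset_topology X))" by (rule openin_topspace)
  then show "topspace (poset_topology X) \<subseteq> X"
    unfolding openin_pt by (rule conjunct1)
  have "openin (poset_topology X) X" unfolding openin_pt by simp
  then show "X \<subseteq> topspace (poset_topology X)"
    by (rule openin_subset)
qed
lemma cc_image:
  assumes "S \<subseteq> topspace T"
  shows "connected_components_of (subtopology T S) = connected_component_of_set (subtopology T S) ` S"
  using assms unfolding connected_components_of_def by (simp add: Int_absorb1)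

lemma card_image_resp:
  assumes "finite S" "\<And>p q. p \<in> S \<Longrightarrow> q \<in> S \<Longrightarrow> g p = g q \<Longrightarrow> h p = h q"
  shows "card (h ` S) \<le> card (g ` S)"
proof -
  define k where "k D = h (SOME p. p \<in> S \<and> g p = D)" for D
  have key: "p \<in> S \<Longrightarrow> k (g p) = h p" for p
  proof -
    assume p: "p \<in> S"
    have "\<exists>q. q \<in> S \<and> g q = g p" using p by blast
    then have "(SOME q. q \<in> S \<and> g q = g p) \<in> S \<and> g (SOME q. q \<in> S \<and> g q = g p) = g p"
      by (rule someI_ex)
    then show "k (g p) = h p" unfolding k_def using assms(2)[OF _ p] by blast
  qed
  have "h ` S = k ` (g ` S)"
    unfolding image_image using key by (simp cong: image_cong)
  then show ?thesis using assms(1) by (simp add: card_image_le)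
qed

lemma comp_overlap:
  assumes "A \<union> B \<subseteq> topspace T" "connectedin T B" "A \<inter> B \<noteq> {}" "finite A"
  shows "card (connected_components_of (subtopology T (A \<union> B)))
          \<le> card (connected_components_of (subtopology T A))"
proof -
  let ?C = "connected_component_of_set (subtopology T (A \<union> B))"
  let ?D = "connected_component_of_set (subtopology T A)"
  obtain q where q: "q \<in> A" "q \<in> B" using assms(3) by blast
  have tsA: "topspace (subtopology T A) = A" using assms(1) by auto
  have Bc: "connectedin (subtopology T (A \<union> B)) B" using assms(2) by (simp add: connectedin_subtopology)
  have eqB: "?C p = ?C q" if "p \<in> B" for p
  proof -
    have "connected_component_of (subtopology T (A \<union> B)) q p"
      using Bc q that unfolding connected_component_of_def by blast
    then have "connected_component_of (subtopology T (A \<union> B)) q = connected_component_of (subtopology T (A \<union> B)) p"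
      by (rule conjunct2[OF conjunct2[OF iffD1[OF connected_component_of_equiv]]])
    then show ?thesis by simp
  qed
  have "?C ` (A \<union> B) = ?C ` A"
  proof
    show "?C ` (A \<union> B) \<subseteq> ?C ` A"
    proof
      fix y assume "y \<in> ?C ` (A \<union> B)"
      then obtain p where p: "p \<in> A \<union> B" "y = ?C p" by blast
      show "y \<in> ?C ` A"
      proof (cases "p \<in> A")
        case True then show ?thesis using p by blast
      next
        case False
        then have "p \<in> B" using p by blast
        then show ?thesis using p q eqB by blast
      qed
    qed
  qed blast
  moreover have "card (?C ` A) \<le> card (?D ` A)"
  proof (rule card_image_resp[OF assms(4)])
    fix p r assume pr: "p \<in> A" "r \<in> A" "?D p = ?D r"
    have "r \<in> ?D r" using pr(2) tsA by (simp add: connected_component_of_refl)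
    then have "connected_component_of (subtopology T A) p r"
      using pr(3) by (metis mem_Collect_eq)
    then have "connected_component_of (subtopology T (A \<union> B)) p r"
      by (rule connected_component_of_mono) blast
    then have "connected_component_of (subtopology T (A \<union> B)) p = connected_component_of (subtopology T (A \<union> B)) r"
      by (rule conjunct2[OF conjunct2[OF iffD1[OF connected_component_of_equiv]]])
    then show "?C p = ?C r" by simp
  qed
  moreover have "A \<subseteq> topspace T" using assms(1) by blast
  ultimately show ?thesis
    using assms(1) by (simp add: cc_image)
qed

lemma conn_sep:
  assumes "connectedin T K" "K \<subseteq> A \<union> B" "openin T A" "openin T B" "A \<inter> B = {}"
  shows "K \<subseteq> A \<or> K \<subseteq> B"
proof (rule ccontr)
  assume "\<not> (K \<subseteq> A \<or> K \<subseteq> B)"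
  then have "A \<inter> K \<noteq> {}" "B \<inter> K \<noteq> {}" using assms(2) by blast+
  moreover have "A \<inter> B \<inter> K = {}" using assms(5) by blast
  ultimately show False using connectedinD[OF assms(1,3,4,2)] by blast
qed

lemma cc_eq_from_rel:
  "connected_component_of X p r \<Longrightarrow> connected_component_of_set X p = connected_component_of_set X r"
proof -
  assume "connected_component_of X p r"
  then have "connected_component_of X p = connected_component_of X r"
    by (rule conjunct2[OF conjunct2[OF iffD1[OF connected_component_of_equiv]]])
  then show ?thesis by simp
qed

lemma comp_disjoint:
  assumes "openin T A" "openin T B" "connectedin T B" "A \<inter> B = {}" "B \<noteq> {}" "finite A"
  shows "card (connected_components_of (subtopology T (A \<union> B)))
          = card (connected_components_of (subtopology T A)) + 1"
proof -
  let ?C = "connected_component_of_set (subtopology T (A \<union> B))"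
  let ?D = "connected_component_of_set (subtopology T A)"
  have sub: "A \<union> B \<subseteq> topspace T" "A \<subseteq> topspace T"
    using assms(1,2) openin_subset by auto
  have Csub: "?C p \<subseteq> A \<or> ?C p \<subseteq> B" for p
  proof -
    have "connectedin (subtopology T (A \<union> B)) (?C p)"
      by (rule connectedin_connected_component_of)
    then have "connectedin T (?C p)" "?C p \<subseteq> A \<union> B"
      by (auto simp: connectedin_subtopology)
    then show ?thesis using conn_sep assms(1,2,4) by blast
  qed
  have CB: "?C p = B" if "p \<in> B" for p
  proof -
    have Bc: "connectedin (subtopology T (A \<union> B)) B" using assms(3) by (simp add: connectedin_subtopology)
    have BC: "B \<subseteq> ?C p" using connected_component_of_maximal[OF Bc that] .
    have "?C p \<subseteq> B" using Csub[of p] BC that assms(4) by blast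
    with BC show ?thesis by blast
  qed
  have CA: "?C p = ?D p" if "p \<in> A" for p
  proof -
    have "connected_component_of (subtopology T (A \<union> B)) p p"
      using that sub by (auto simp: connected_component_of_refl)
    then have pC: "p \<in> ?C p" by simp
    then have CA': "?C p \<subseteq> A" using Csub[of p] that assms(4) by blast
    have "connectedin (subtopology T (A \<union> B)) (?C p)"
      by (rule connectedin_connected_component_of)
    then have Cc: "connectedin (subtopology T A) (?C p)"
      using CA' by (auto simp: connectedin_subtopology)
    have "?D p = ?C p"
    proof (rule connected_component_of_unique[OF pC Cc])
      fix C' assume "p \<in> C' \<and> connectedin (subtopology T A) C'"
      then have "p \<in> C'" "connectedin (subtopology T (A \<union> B)) C'"
        by (auto simp: connectedin_subtopology)
      then show "C' \<subseteq> ?C p" using connected_component_of_maximal by metis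
    qed
    then show ?thesis by simp
  qed
  have "?C ` (A \<union> B) = insert B (?D ` A)"
  proof -
    have "?C ` (A \<union> B) = ?C ` A \<union> ?C ` B" by (rule image_Un)
    also have "?C ` A = ?D ` A" using CA by (simp cong: image_cong)
    also have "?C ` B = {B}" using CB assms(5) by auto
    finally show ?thesis by blast
  qed
  moreover have "B \<notin> ?D ` A"
  proof
    assume "B \<in> ?D ` A"
    then obtain p where p: "p \<in> A" "B = ?D p" by blast
    have "connected_component_of (subtopology T A) p p"
      using p(1) sub by (auto simp: connected_component_of_refl)
    then have "p \<in> B" using p(2) by simp
    then show False using \<open>p \<in> A\<close> assms(4) by blast
  qed
  moreover have "finite (?D ` A)" using assms(6) by simp
  ultimately show ?thesis using sub by (simp add: cc_image)
qed

lemma Ux_conn: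
  assumes "x \<in> X"
  shows "connectedin (poset_topology X) {y\<in>X. y \<le> x}"
  unfolding connectedin topspace_pt
proof (intro conjI notI)
  show "{y\<in>X. y \<le> x} \<subseteq> X" by blast
  fix E
  assume "\<exists>E1 E2. openin (poset_topology X) E1 \<and> openin (poset_topology X) E2 \<and>
            {y\<in>X. y \<le> x} \<subseteq> E1 \<union> E2 \<and> E1 \<inter> E2 \<inter> {y\<in>X. y \<le> x} = {} \<and>
            E1 \<inter> {y\<in>X. y \<le> x} \<noteq> {} \<and> E2 \<inter> {y\<in>X. y \<le> x} \<noteq> {}"
  then obtain E1 E2 where E: "openin (poset_topology X) E1" "openin (poset_topology X) E2"
    "{y\<in>X. y \<le> x} \<subseteq> E1 \<union> E2" "E1 \<inter> E2 \<inter> {y\<in>X. y \<le> x} = {}"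
    "E1 \<inter> {y\<in>X. y \<le> x} \<noteq> {}" "E2 \<inter> {y\<in>X. y \<le> x} \<noteq> {}" by blast
  have d1: "\<forall>z\<in>E1. \<forall>y\<in>X. y \<le> z \<longrightarrow> y \<in> E1" using E(1) unfolding openin_pt by blast
  have d2: "\<forall>z\<in>E2. \<forall>y\<in>X. y \<le> z \<longrightarrow> y \<in> E2" using E(2) unfolding openin_pt by blast
  have "x \<in> E1 \<or> x \<in> E2" using E(3) assms by blast
  then show False
  proof
    assume "x \<in> E1"
    then have "{y\<in>X. y \<le> x} \<subseteq> E1" using d1 by blast
    then show False using E(4,6) by blast
  next
    assume "x \<in> E2"
    then have "{y\<in>X. y \<le> x} \<subseteq> E2" using d2 by blast
    then show False using E(4,5) by blast
  qed
qed

lemma sublevel_open: "openin (poset_topology X) (sublevel X f t)"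
  unfolding openin_pt sublevel_def by (auto intro: order_trans)

lemma sublevel_cong: "{x\<in>X. f x \<le> s} = {x\<in>X. f x \<le> t} \<Longrightarrow> sublevel X f s = sublevel X f t"
  unfolding sublevel_def by simp

lemma sublevel_insert: "{y\<in>X. f y \<le> t} = insert x {y\<in>X. f y \<le> t'} \<Longrightarrow>
   sublevel X f t = sublevel X f t' \<union> {y\<in>X. y \<le> x}"
  unfolding sublevel_def by auto

lemma crit:
  assumes fin: "finite X" and dw: "down_wide X" and mf: "morse_function X f" and inj: "inj_on f X"
    and x: "x \<in> X"
    and H: "\<And>w z. w \<in> X \<Longrightarrow> z \<in> X \<Longrightarrow> w \<le> x \<Longrightarrow> w \<le> z \<Longrightarrow> f x \<le> f z"
  shows "minimal_in X x \<and> critical_point X f x"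
proof -
  have m1: "card {w\<in>X. covers X w x \<and> f w \<ge> f x} \<le> 1" using mf x unfolding morse_function_def by blast
  have min: "minimal_in X x"
  proof (rule ccontr)
    assume nm: "\<not> minimal_in X x"
    then have "card {y\<in>X. covers X y x} \<ge> 2" using dw x unfolding down_wide_def by blast
    moreover have "{y\<in>X. covers X y x} \<subseteq> {w\<in>X. covers X w x \<and> f w \<ge> f x}"
    proof
      fix w assume "w \<in> {y\<in>X. covers X y x}"
      then have "w \<in> X" "covers X w x" by auto
      then have "w < x" unfolding covers_def by blast
      then have "f x \<le> f w" using H[of w w] \<open>w \<in> X\<close> by simp
      then show "w \<in> {w\<in>X. covers X w x \<and> f w \<ge> f x}" using \<open>w \<in> X\<close> \<open>covers X w x\<close> by blast
    qed
    then have "card {y\<in>X. covers X y x} \<le> card {w\<in>X. covers X w x \<and> f w \<ge> f x}"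
      by (rule card_mono[rotated]) (use fin in simp)
    ultimately show False using m1 by linarith
  qed
  have up: "{y\<in>X. covers X x y \<and> f x \<ge> f y} = {}"
  proof (rule ccontr)
    assume "{y\<in>X. covers X x y \<and> f x \<ge> f y} \<noteq> {}"
    then obtain y where y: "y \<in> X" "covers X x y" "f y \<le> f x" by blast
    then have "x < y" unfolding covers_def by blast
    then have "f x \<le> f y" using H[of x y] x y(1) by simp
    then have "f x = f y" using y(3) by simp
    then have "x = y" using inj x y(1) unfolding inj_on_def by blast
    then show False using \<open>x < y\<close> by simp
  qed
  have down: "{w\<in>X. covers X w x \<and> f w \<ge> f x} = {}"
    using min unfolding minimal_in_def covers_def by blast
  show ?thesis using min up down x unfolding critical_point_def by blast
qed

lemma main_ind:
  fixes X :: "'a::order set" and f :: "'a \<Rightarrow> real"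
  assumes fin: "finite X" and dw: "down_wide X" and mf: "morse_function X f" and inj: "inj_on f X"
  shows "\<forall>t. card {y\<in>X. a < f y \<and> f y \<le> t} = n \<longrightarrow> a \<le> t \<longrightarrow> t \<le> b \<longrightarrow>
     b0 X (sublevel X f t) \<le> b0 X (sublevel X f a) \<or>
     (\<exists>c. a < c \<and> c \<le> b \<and> critical_value X f c \<and>
           b0 X (sublevel X f c) = b0 X (sublevel X f a) + 1 \<and>
           (\<forall>x. critical_point X f x \<and> f x = c \<longrightarrow> minimal_in X x))"
proof (induction n)
  case 0
  show ?case
  proof (intro allI impI)
    fix t assume c: "card {y\<in>X. a < f y \<and> f y \<le> t} = 0" and at: "a \<le> t"
    have "finite {y\<in>X. a < f y \<and> f y \<le> t}" using fin by simp
    then have e: "{y\<in>X. a < f y \<and> f y \<le> t} = {}" using c by simp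
    have "{x\<in>X. f x \<le> t} = {x\<in>X. f x \<le> a}"
    proof (rule set_eqI, rule iffI)
      fix x assume "x \<in> {x\<in>X. f x \<le> t}"
      then show "x \<in> {x\<in>X. f x \<le> a}" using e by (auto simp: not_less[symmetric])
    next
      fix x assume "x \<in> {x\<in>X. f x \<le> a}"
      then show "x \<in> {x\<in>X. f x \<le> t}" using at by auto
    qed
    then have "sublevel X f t = sublevel X f a" by (rule sublevel_cong)
    then show "b0 X (sublevel X f t) \<le> b0 X (sublevel X f a) \<or>
     (\<exists>c. a < c \<and> c \<le> b \<and> critical_value X f c \<and>
           b0 X (sublevel X f c) = b0 X (sublevel X f a) + 1 \<and>
           (\<forall>x. critical_point X f x \<and> f x = c \<longrightarrow> minimal_in X x))" by simp
  qed
next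
  case (Suc n)
  show ?case
  proof (intro allI impI)
    fix t assume c: "card {y\<in>X. a < f y \<and> f y \<le> t} = Suc n" and at: "a \<le> t" and tb: "t \<le> b"
    define M where "M = {y\<in>X. a < f y \<and> f y \<le> t}"
    have finM: "finite M" unfolding M_def using fin by simp
    have neM: "M \<noteq> {}" using c unfolding M_def by (metis card.empty nat.distinct(1))
    have "Max (f ` M) \<in> f ` M" using finM neM by simp
    then obtain x where xM: "x \<in> M" and xmax0: "f x = Max (f ` M)" by auto
    have xmax: "f y \<le> f x" if "y \<in> M" for y using xmax0 finM that by simp
    have xX: "x \<in> X" and ax: "a < f x" and xt: "f x \<le> t" using xM unfolding M_def by auto
    define t' where "t' = Max (insert a (f ` (M - {x})))"
    have fin': "finite (insert a (f ` (M - {x})))" using finM by simp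
    have at': "a \<le> t'" unfolding t'_def using fin' by simp
    have lt: "f y < f x" if "y \<in> M - {x}" for y
    proof -
      have "f y \<le> f x" using xmax that by blast
      moreover have "f y \<noteq> f x" using inj that xX unfolding inj_on_def M_def by blast
      ultimately show ?thesis by simp
    qed
    have t'x: "t' < f x" unfolding t'_def using fin' ax lt by (simp add: Max_less_iff)
    have ge: "f y \<le> t'" if "y \<in> M - {x}" for y unfolding t'_def using fin' that by simp
    have M': "{y\<in>X. a < f y \<and> f y \<le> t'} = M - {x}"
    proof (rule set_eqI, rule iffI)
      fix y assume y: "y \<in> {y\<in>X. a < f y \<and> f y \<le> t'}"
      then have "y \<in> M" unfolding M_def using t'x xt by auto
      moreover have "y \<noteq> x" using y t'x by auto
      ultimately show "y \<in> M - {x}" by blast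
    next
      fix y assume y: "y \<in> M - {x}"
      then show "y \<in> {y\<in>X. a < f y \<and> f y \<le> t'}" using ge[OF y] unfolding M_def by auto
    qed
    have cn: "card {y\<in>X. a < f y \<and> f y \<le> t'} = n" unfolding M' using c xM finM
      unfolding M_def by simp
    have t'b: "t' \<le> b" using t'x xt tb by simp
    have small: "f z \<le> t'" if "z \<in> X" "f z < f x" for z
    proof (cases "f z \<le> a")
      case True then show ?thesis using at' by simp
    next
      case False
      then have "z \<in> M - {x}" unfolding M_def using that xt by auto
      then show ?thesis by (rule ge)
    qed
    have Lt: "{y\<in>X. f y \<le> t} = insert x {y\<in>X. f y \<le> t'}"
    proof (rule set_eqI, rule iffI)
      fix y assume y: "y \<in> {y\<in>X. f y \<le> t}"
      show "y \<in> insert x {y\<in>X. f y \<le> t'}"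
      proof (cases "y = x")
        case False
        have "f y \<le> t'"
        proof (cases "f y \<le> a")
          case True then show ?thesis using at' by simp
        next
          case F: False
          then have "y \<in> M - {x}" unfolding M_def using y False by auto
          then show ?thesis by (rule ge)
        qed
        then show ?thesis using y by blast
      qed simp
    next
      fix y assume "y \<in> insert x {y\<in>X. f y \<le> t'}"
      then show "y \<in> {y\<in>X. f y \<le> t}" using xX xt t'x by auto
    qed
    have Lfx: "{y\<in>X. f y \<le> f x} = {y\<in>X. f y \<le> t}"
    proof (rule set_eqI, rule iffI)
      fix y assume "y \<in> {y\<in>X. f y \<le> t}"
      then show "y \<in> {y\<in>X. f y \<le> f x}" using xmax ax unfolding M_def
        by (cases "f y \<le> a") auto
    next
      fix y assume "y \<in> {y\<in>X. f y \<le> f x}"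
      then show "y \<in> {y\<in>X. f y \<le> t}" using xt by auto
    qed
    have St: "sublevel X f t = sublevel X f t' \<union> {y\<in>X. y \<le> x}"
      by (rule sublevel_insert[OF Lt])
    have Sfx: "sublevel X f (f x) = sublevel X f t" by (rule sublevel_cong[OF Lfx])
    let ?T = "poset_topology X"
    have op1: "openin ?T (sublevel X f t')" by (rule sublevel_open)
    have op2: "openin ?T {y\<in>X. y \<le> x}" unfolding openin_pt by (auto intro: order_trans)
    have cU: "connectedin ?T {y\<in>X. y \<le> x}" by (rule Ux_conn[OF xX])
    have finS: "finite (sublevel X f t')" using op1 fin unfolding openin_pt by (auto intro: finite_subset)
    have sub: "sublevel X f t' \<union> {y\<in>X. y \<le> x} \<subseteq> topspace ?T"
      using op1 op2 openin_subset by blast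
    have IH: "b0 X (sublevel X f t') \<le> b0 X (sublevel X f a) \<or>
     (\<exists>c. a < c \<and> c \<le> b \<and> critical_value X f c \<and>
           b0 X (sublevel X f c) = b0 X (sublevel X f a) + 1 \<and>
           (\<forall>x. critical_point X f x \<and> f x = c \<longrightarrow> minimal_in X x))"
      using Suc.IH cn at' t'b by blast
    show "b0 X (sublevel X f t) \<le> b0 X (sublevel X f a) \<or>
     (\<exists>c. a < c \<and> c \<le> b \<and> critical_value X f c \<and>
           b0 X (sublevel X f c) = b0 X (sublevel X f a) + 1 \<and>
           (\<forall>x. critical_point X f x \<and> f x = c \<longrightarrow> minimal_in X x))"
    proof (cases "b0 X (sublevel X f t') \<le> b0 X (sublevel X f a)")
      case False then show ?thesis using IH by blast
    next
      case le: True
      show ?thesis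
      proof (cases "sublevel X f t' \<inter> {y\<in>X. y \<le> x} = {}")
        case False
        have "b0 X (sublevel X f t) \<le> b0 X (sublevel X f t')"
          unfolding b0_def St by (rule comp_overlap[OF sub cU False finS])
        then show ?thesis using le by simp
      next
        case True
        have ne: "{y\<in>X. y \<le> x} \<noteq> {}" using xX by blast
        have eq: "b0 X (sublevel X f t) = b0 X (sublevel X f t') + 1"
          unfolding b0_def St by (rule comp_disjoint[OF op1 op2 cU True ne finS])
        show ?thesis
        proof (cases "b0 X (sublevel X f t') < b0 X (sublevel X f a)")
          case True then show ?thesis using eq by simp
        next
          case False
          then have eq2: "b0 X (sublevel X f t) = b0 X (sublevel X f a) + 1" using eq le by simp
          have H: "f x \<le> f z" if "w \<in> X" "z \<in> X" "w \<le> x" "w \<le> z" for w z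
          proof (rule ccontr)
            assume "\<not> f x \<le> f z"
            then have "f z \<le> t'" using small that(2) by simp
            then have "w \<in> sublevel X f t'" unfolding sublevel_def using that by blast
            then show False using True that by blast
          qed
          have cr: "minimal_in X x \<and> critical_point X f x"
            by (rule crit[OF fin dw mf inj xX H])
          have "a < f x \<and> f x \<le> b \<and> critical_value X f (f x) \<and>
             b0 X (sublevel X f (f x)) = b0 X (sublevel X f a) + 1 \<and>
             (\<forall>y. critical_point X f y \<and> f y = f x \<longrightarrow> minimal_in X y)"
          proof (intro conjI allI impI)
            show "a < f x" by (rule ax)
            show "f x \<le> b" using xt tb by simp
            show "critical_value X f (f x)" unfolding critical_value_def using cr by blast
            show "b0 X (sublevel X f (f x)) = b0 X (sublevel X f a) + 1" using Sfx eq2 by simp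
            fix y assume "critical_point X f y \<and> f y = f x"
            then have "y \<in> X" "f y = f x" unfolding critical_point_def by auto
            then have "y = x" using inj xX unfolding inj_on_def by blast
            then show "minimal_in X y" using cr by simp
          qed
          then show ?thesis by blast
        qed
      qed
    qed
  qed
qed

theorem mainTheorem8:
  fixes X :: "'a::order set" and f :: "'a \<Rightarrow> real" and a b :: real
  assumes "finite X"
    and "path_connected_space (poset_topology X)"
    and "down_wide X"
    and "morse_function X f"
    and "inj_on f X"
    and "a < b"
    and "b0 X (sublevel X f a) < b0 X (sublevel X f b)"
  shows "\<exists>c. a < c \<and> c \<le> b \<and> critical_value X f c \<and>
           b0 X (sublevel X f c) = b0 X (sublevel X f a) + 1 \<and>
           (\<forall>x. critical_point X f x \<and> f x = c \<longrightarrow> minimal_in X x)"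
  using main_ind[OF assms(1,3,4,5), of a "card {y\<in>X. a < f y \<and> f y \<le> b}" b] assms(6,7) by auto

end
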